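(* In any execution of Algorithm $\mathsf{AG}$ (described in the context) with a guild, every process in the maximal guild sends a $\mathrm{DistributeT}$ message.
   Context: System model: a finite set $\mathcal{P}=\{p_1,\dots,p_n\}$ of processes communicating asynchronously over authenticated point-to-point links; every message sent from a correct process to a correct process is eventually delivered. A process that follows its protocol is correct; others (faulty, Byzantine) may behave arbitrarily. $F\subseteq\mathcal{P}$ denotes the (unknown) set of faulty processes of an execution. For $\mathcal{A}\subseteq 2^{\mathcal{P}}$, write $\mathcal{A}^*=\{A' : A'\subseteq A,\ A\in\mathcal{A}\}$. An asymmetric fail-prone system is an array $\mathbb{F}=[\mathcal{F}_1,\dots,\mathcal{F}_n]$ with $\mathcal{F}_i\subseteq 2^{\mathcal{P}}$. An asymmetric Byzantine quorum system for $\mathbb{F}$ is an array $\mathbb{Q}=[\mathcal{Q}_1,\dots,\mathcal{Q}_n]$ with $\mathcal{Q}_i\subseteq 2^{\mathcal{P}}$ (quorums for $p_i$) satisfying: (consistency) for all $i,j$, all $Q_i\in\mathcal{Q}_i$, $Q_j\in\mathcal{Q}_j$, $F_{ij}\in\mathcal{F}_i^*\cap\mathcal{F}_j^*$: $Q_i\cap Q_j\not\subseteq F_{ij}$; (availability) for all $i$ and $F_i\in\mathcal{F}_i$ there is $Q_i\in\mathcal{Q}_i$ with $F_i\cap Q_i=\emptyset$. A kernel for $p_i$ is a set $K\subseteq\mathcal{P}$ intersecting every $Q\in\mathcal{Q}_i$; $\mathcal{K}_i$ is the set of kernels for $p_i$. A correct process $p_i$ is wise if $F\in\mathcal{F}_i^*$.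 A guild is a set $\mathcal{G}$ of wise processes such that every $p_i\in\mathcal{G}$ has some $Q_i\in\mathcal{Q}_i$ with $Q_i\subseteq\mathcal{G}$. An execution with a guild is one in which a nonempty guild exists; the maximal guild $\mathcal{G}_{max}$ is the union of all guilds. Asymmetric reliable broadcast (arb-broadcast / arb-deliver) guarantees, in every execution with a guild: if a correct process arb-broadcasts $m$, every process of $\mathcal{G}_{max}$ eventually arb-delivers $m$; for each sender, all processes of $\mathcal{G}_{max}$ that arb-deliver from it deliver the same message; if some process of $\mathcal{G}_{max}$ arb-delivers a message from a sender, all processes of $\mathcal{G}_{max}$ eventually arb-deliver a message from that sender; a correct process arb-delivers at most one message per sender, and from a correct sender only a message it arb-broadcast. Algorithm $\mathsf{AG}$ (code of $p_i$; each correct process invokes ag-propose$(x_i)$ exactly once; each guarded "upon there being ..." action executes at most once, message handlers once per message). State: sets $S_i,T_i,U_i$ initially empty, boolean $sentT$ initially false. (1) Upon ag-propose$(x_i)$: arb-broadcast $(p_i,x_i)$. (2) Upon arb-delivering $(p_j,x_j)$ from $p_j$: $S_i\gets S_i\cup\{(p_j,x_j)\}$. (3) Upon there being $Q\in\mathcal{Q}_i$ such that for every $p_j\in Q$ some pair $(p_j,\cdot)\in S_i$: send $\langle\mathrm{DistributeS},p_i,S_i\rangle$ to all. (4) For a received $\langle\mathrm{DistributeS},p_j,S_j\rangle$: once $S_j\subseteq S_i$, provided $sentT$ is false at that moment, set $T_i\gets T_i\cup S_j$ and send $\langle\mathrm{Ack},p_i\rangle$ to $p_j$. (5) Upon Ack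 received from every member of some $Q\in\mathcal{Q}_i$: send Ready to all. (6) Upon Ready received from every member of some $Q\in\mathcal{Q}_i$: send Confirm to all. (7) Upon Confirm received from every member of some $K\in\mathcal{K}_i$: send Confirm to all. (8) Upon Confirm received from every member of some $Q\in\mathcal{Q}_i$: send $\langle\mathrm{DistributeT},p_i,T_i\rangle$ to all and set $sentT\gets$ true. (9) For a received $\langle\mathrm{DistributeT},p_j,T_j\rangle$ from $p_j$: once $T_j\subseteq S_i$, set $U_i\gets U_i\cup T_j$. (10) Upon DistributeT received from every member of some $Q\in\mathcal{Q}_i$: ag-deliver$(U_i)$. *)

theory Defs
  imports Main
begin

text \<open>Processes are the elements of a finite type 'p (so P = UNIV).
  FP i is the fail-prone family of p_i, QS i its family of quorums.\<close>

definition star :: "'p set set \<Rightarrow> 'p set set" where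
  "star A = {A'. \<exists>B\<in>A. A' \<subseteq> B}"

definition asym_quorum_system :: "('p \<Rightarrow> 'p set set) \<Rightarrow> ('p \<Rightarrow> 'p set set) \<Rightarrow> bool" where
  "asym_quorum_system FP QS \<longleftrightarrow>
     (\<forall>i j Qi Qj Fij. Qi \<in> QS i \<longrightarrow> Qj \<in> QS j \<longrightarrow> Fij \<in> star (FP i) \<inter> star (FP j)
          \<longrightarrow> \<not> (Qi \<inter> Qj \<subseteq> Fij)) \<and>
     (\<forall>i. \<forall>Fi\<in>FP i. \<exists>Qi\<in>QS i. Fi \<inter> Qi = {})"

definition kernels :: "('p \<Rightarrow> 'p set set) \<Rightarrow> 'p \<Rightarrow> 'p set set" where
  "kernels QS i = {K. \<forall>Q\<in>QS i. K \<inter> Q \<noteq> {}}"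

definition wise :: "('p \<Rightarrow> 'p set set) \<Rightarrow> 'p set \<Rightarrow> 'p \<Rightarrow> bool" where
  "wise FP F i \<longleftrightarrow> i \<notin> F \<and> F \<in> star (FP i)"

definition guild :: "('p \<Rightarrow> 'p set set) \<Rightarrow> ('p \<Rightarrow> 'p set set) \<Rightarrow> 'p set \<Rightarrow> 'p set \<Rightarrow> bool" where
  "guild FP QS F G \<longleftrightarrow> (\<forall>i\<in>G. wise FP F i) \<and> (\<forall>i\<in>G. \<exists>Q\<in>QS i. Q \<subseteq> G)"

definition Gmax :: "('p \<Rightarrow> 'p set set) \<Rightarrow> ('p \<Rightarrow> 'p set set) \<Rightarrow> 'p set \<Rightarrow> 'p set" where
  "Gmax FP QS F = \<Union>{G. guild FP QS F G}"

datatype ('p, 'v) msg =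
    DistributeS 'p "('p \<times> 'v) set"
  | Ack 'p
  | Ready
  | Confirm
  | DistributeT 'p "('p \<times> 'v) set"

datatype gact = G3 | G5 | G6 | G7 | G8 | G10

text \<open>Local actions: guarded actions, and the processing of a pending
  DistributeS message (handler 4) or DistributeT message (handler 9).\<close>
datatype ('p, 'v) act =
    Guard gact
  | HandleS 'p "('p \<times> 'v) set"
  | HandleT 'p "('p \<times> 'v) set"

text \<open>Global events of an execution (interleaving semantics, one event per time step):
  Propose p x: p invokes ag-propose(x) and (action 1) arb-broadcasts (p,x);
  ArbDeliver i j x: p_i arb-delivers (p_j,x) from sender p_j;
  Receive i j m: p_i receives message m from p_j (authenticated sender);
  Act p a: p executes local action a (a no-op unless enabled).\<close>
datatype ('p, 'v) event =
    Propose 'p 'v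
  | ArbDeliver 'p 'p 'v
  | Receive 'p 'p "('p, 'v) msg"
  | Act 'p "('p, 'v) act"

record ('p, 'v) lstate =
  agS :: "('p \<times> 'v) set"
  agT :: "('p \<times> 'v) set"
  agU :: "('p \<times> 'v) set"
  sentT :: bool
  fired :: "gact set"
  pendS :: "('p \<times> ('p \<times> 'v) set) list"
  pendT :: "('p \<times> ('p \<times> 'v) set) list"
  ackfrom :: "'p set"
  readyfrom :: "'p set"
  confirmfrom :: "'p set"
  dtfrom :: "'p set"

definition init_state :: "('p, 'v) lstate" where
  "init_state = \<lparr>agS = {}, agT = {}, agU = {}, sentT = False, fired = {},
     pendS = [], pendT = [], ackfrom = {}, readyfrom = {}, confirmfrom = {}, dtfrom = {}\<rparr>"

fun enabled :: "('p \<Rightarrow> 'p set set) \<Rightarrow> 'p \<Rightarrow> ('p, 'v) act \<Rightarrow> ('p, 'v) lstate \<Rightarrow> bool" where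
  "enabled QS p (Guard G3) s \<longleftrightarrow> G3 \<notin> fired s \<and> (\<exists>Q\<in>QS p. \<forall>j\<in>Q. \<exists>x. (j, x) \<in> agS s)"
| "enabled QS p (Guard G5) s \<longleftrightarrow> G5 \<notin> fired s \<and> (\<exists>Q\<in>QS p. Q \<subseteq> ackfrom s)"
| "enabled QS p (Guard G6) s \<longleftrightarrow> G6 \<notin> fired s \<and> (\<exists>Q\<in>QS p. Q \<subseteq> readyfrom s)"
| "enabled QS p (Guard G7) s \<longleftrightarrow> G7 \<notin> fired s \<and> (\<exists>K\<in>kernels QS p. K \<subseteq> confirmfrom s)"
| "enabled QS p (Guard G8) s \<longleftrightarrow> G8 \<notin> fired s \<and> (\<exists>Q\<in>QS p. Q \<subseteq> confirmfrom s)"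
| "enabled QS p (Guard G10) s \<longleftrightarrow> G10 \<notin> fired s \<and> (\<exists>Q\<in>QS p. Q \<subseteq> dtfrom s)"
| "enabled QS p (HandleS j X) s \<longleftrightarrow> (j, X) \<in> set (pendS s) \<and> X \<subseteq> agS s"
| "enabled QS p (HandleT j X) s \<longleftrightarrow> (j, X) \<in> set (pendT s) \<and> X \<subseteq> agS s"

fun effect :: "('p, 'v) act \<Rightarrow> ('p, 'v) lstate \<Rightarrow> ('p, 'v) lstate" where
  "effect (Guard G8) s = s\<lparr>fired := insert G8 (fired s), sentT := True\<rparr>"
| "effect (Guard g) s = s\<lparr>fired := insert g (fired s)\<rparr>"
| "effect (HandleS j X) s =
     (if sentT s then s\<lparr>pendS := remove1 (j, X) (pendS s)\<rparr>
      else s\<lparr>pendS := remove1 (j, X) (pendS s), agT := agT s \<union> X\<rparr>)"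
| "effect (HandleT j X) s = s\<lparr>pendT := remove1 (j, X) (pendT s), agU := agU s \<union> X\<rparr>"

fun outputs :: "'p \<Rightarrow> ('p, 'v) act \<Rightarrow> ('p, 'v) lstate \<Rightarrow> ('p \<times> ('p, 'v) msg) set" where
  "outputs p (Guard G3) s = {(q, DistributeS p (agS s)) | q. True}"
| "outputs p (Guard G5) s = {(q, Ready) | q. True}"
| "outputs p (Guard G6) s = {(q, Confirm) | q. True}"
| "outputs p (Guard G7) s = {(q, Confirm) | q. True}"
| "outputs p (Guard G8) s = {(q, DistributeT p (agT s)) | q. True}"
| "outputs p (Guard G10) s = {}"
| "outputs p (HandleS j X) s = (if sentT s then {} else {(j, Ack p)})"
| "outputs p (HandleT j X) s = {}"

fun recv_upd :: "'p \<Rightarrow> ('p, 'v) msg \<Rightarrow> ('p, 'v) lstate \<Rightarrow> ('p, 'v) lstate" where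
  "recv_upd j (DistributeS k X) s = s\<lparr>pendS := pendS s @ [(k, X)]\<rparr>"
| "recv_upd j (Ack k) s = s\<lparr>ackfrom := insert j (ackfrom s)\<rparr>"
| "recv_upd j Ready s = s\<lparr>readyfrom := insert j (readyfrom s)\<rparr>"
| "recv_upd j Confirm s = s\<lparr>confirmfrom := insert j (confirmfrom s)\<rparr>"
| "recv_upd j (DistributeT k X) s = s\<lparr>pendT := pendT s @ [(k, X)], dtfrom := insert j (dtfrom s)\<rparr>"

fun step :: "('p \<Rightarrow> 'p set set) \<Rightarrow> 'p \<Rightarrow> ('p, 'v) event \<Rightarrow> ('p, 'v) lstate \<Rightarrow> ('p, 'v) lstate" where
  "step QS p (Propose q x) s = s"
| "step QS p (ArbDeliver i j x) s = (if i = p then s\<lparr>agS := insert (j, x) (agS s)\<rparr> else s)"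
| "step QS p (Receive i j m) s = (if i = p then recv_upd j m s else s)"
| "step QS p (Act q a) s = (if q = p \<and> enabled QS p a s then effect a s else s)"

text \<open>Local state of p before the event at time t.\<close>
primrec lst :: "('p \<Rightarrow> 'p set set) \<Rightarrow> (nat \<Rightarrow> ('p, 'v) event) \<Rightarrow> 'p \<Rightarrow> nat \<Rightarrow> ('p, 'v) lstate" where
  "lst QS ev p 0 = init_state"
| "lst QS ev p (Suc t) = step QS p (ev t) (lst QS ev p t)"

definition sends :: "('p \<Rightarrow> 'p set set) \<Rightarrow> (nat \<Rightarrow> ('p, 'v) event) \<Rightarrow> 'p \<Rightarrow> 'p \<Rightarrow> ('p, 'v) msg \<Rightarrow> nat \<Rightarrow> bool" where
  "sends QS ev p q m t \<longleftrightarrow>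
     (\<exists>a. ev t = Act p a \<and> enabled QS p a (lst QS ev p t) \<and> (q, m) \<in> outputs p a (lst QS ev p t))"

text \<open>An execution of AG with faulty set F: correct processes (not in F) run the
  state machine above (their state is computed from the trace), faulty processes are
  unconstrained.\<close>
definition ag_execution :: "('p \<Rightarrow> 'p set set) \<Rightarrow> ('p \<Rightarrow> 'p set set) \<Rightarrow> 'p set \<Rightarrow> (nat \<Rightarrow> ('p, 'v) event) \<Rightarrow> bool" where
  "ag_execution FP QS F ev \<longleftrightarrow>
     \<comment> \<open>each correct process invokes ag-propose exactly once\<close>
     (\<forall>p. p \<notin> F \<longrightarrow> (\<exists>!t. \<exists>x. ev t = Propose p x)) \<and>
     \<comment> \<open>reliable links between correct processes\<close>
     (\<forall>p q m t. p \<notin> F \<longrightarrow> q \<notin> F \<longrightarrow> sends QS ev p q m t \<longrightarrow> (\<exists>t'>t. ev t' = Receive q p m)) \<and>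
     \<comment> \<open>authenticated links: a message received from a correct process was sent by it\<close>
     (\<forall>p q m t. p \<notin> F \<longrightarrow> q \<notin> F \<longrightarrow> ev t = Receive q p m \<longrightarrow> (\<exists>t'<t. sends QS ev p q m t')) \<and>
     \<comment> \<open>fairness: an enabled local action of a correct process is eventually executed\<close>
     (\<forall>p a t. p \<notin> F \<longrightarrow> enabled QS p a (lst QS ev p t) \<longrightarrow> (\<exists>t'\<ge>t. ev t' = Act p a)) \<and>
     \<comment> \<open>asymmetric reliable broadcast: validity\<close>
     (\<forall>j x t. j \<notin> F \<longrightarrow> ev t = Propose j x \<longrightarrow>
        (\<forall>i\<in>Gmax FP QS F. \<exists>t'. ev t' = ArbDeliver i j x)) \<and>
     \<comment> \<open>consistency\<close>
     (\<forall>i k j x y t t'. i \<in> Gmax FP QS F \<longrightarrow> k \<in> Gmax FP QS F \<longrightarrow>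
        ev t = ArbDeliver i j x \<longrightarrow> ev t' = ArbDeliver k j y \<longrightarrow> x = y) \<and>
     \<comment> \<open>totality\<close>
     (\<forall>i j x t. i \<in> Gmax FP QS F \<longrightarrow> ev t = ArbDeliver i j x \<longrightarrow>
        (\<forall>k\<in>Gmax FP QS F. \<exists>t' y. ev t' = ArbDeliver k j y)) \<and>
     \<comment> \<open>integrity: at most one delivery per sender at a correct process\<close>
     (\<forall>i j x y t t'. i \<notin> F \<longrightarrow> ev t = ArbDeliver i j x \<longrightarrow> ev t' = ArbDeliver i j y \<longrightarrow> t = t') \<and>
     \<comment> \<open>integrity: from a correct sender only a message it arb-broadcast\<close>
     (\<forall>i j x t. i \<notin> F \<longrightarrow> j \<notin> F \<longrightarrow> ev t = ArbDeliver i j x \<longrightarrow> (\<exists>t'. ev t' = Propose j x))"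

end

theory Submission
  imports Defs
begin

lemma fired_step:
  assumes "g \<in> fired (step QS p e s)" "g \<notin> fired s"
  shows "e = Act p (Guard g) \<and> enabled QS p (Guard g) s"
proof (cases e)
  case (Receive i j m) then show ?thesis using assms by (cases m) (auto split: if_splits)
next
  case (Act q a) then show ?thesis using assms
  proof (cases a)
    case (Guard g') then show ?thesis using assms Act by (cases g') (auto split: if_splits)
  qed (auto split: if_splits)
qed (use assms in \<open>auto split: if_splits\<close>)

lemma sentT_step:
  assumes "sentT s \<longrightarrow> G8 \<in> fired s"
  shows "sentT (step QS p e s) \<longrightarrow> G8 \<in> fired (step QS p e s)"
proof (cases e)
  case (Receive i j m) then show ?thesis using assms by (cases m) (auto split: if_splits)
next
  case (Act q a) then show ?thesis using assms
  proof (cases a)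
    case (Guard g') then show ?thesis using assms Act by (cases g') (auto split: if_splits)
  qed (auto split: if_splits)
qed (use assms in \<open>auto split: if_splits\<close>)

lemma confirm_step:
  assumes "k \<in> confirmfrom (step QS p e s)" "k \<notin> confirmfrom s"
  shows "e = Receive p k Confirm"
proof (cases e)
  case (Receive i j m) then show ?thesis using assms by (cases m) (auto split: if_splits)
next
  case (Act q a) then show ?thesis using assms
  proof (cases a)
    case (Guard g') then show ?thesis using assms Act by (cases g') (auto split: if_splits)
  qed (auto split: if_splits)
qed (use assms in \<open>auto split: if_splits\<close>)

lemma agS_step:
  assumes "(k,x) \<in> agS (step QS p e s)" "(k,x) \<notin> agS s"
  shows "e = ArbDeliver p k x"
proof (cases e)
  case (Receive i j m) then show ?thesis using assms by (cases m) (auto split: if_splits)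
next
  case (Act q a) then show ?thesis using assms
  proof (cases a)
    case (Guard g') then show ?thesis using assms Act by (cases g') (auto split: if_splits)
  qed (auto split: if_splits)
qed (use assms in \<open>auto split: if_splits\<close>)

lemma agS_fin_step:
  assumes "finite (agS s)"
  shows "finite (agS (step QS p e s))"
proof (cases e)
  case (Receive i j m) then show ?thesis using assms by (cases m) (auto split: if_splits)
next
  case (Act q a) then show ?thesis using assms
  proof (cases a)
    case (Guard g') then show ?thesis using assms Act by (cases g') (auto split: if_splits)
  qed (auto split: if_splits)
qed (use assms in \<open>auto split: if_splits\<close>)

lemma pend_step:
  assumes "x \<in> set (pendS s)" "x \<notin> set (pendS (step QS k e s))"
  shows "e = Act k (HandleS (fst x) (snd x)) \<and> enabled QS k (HandleS (fst x) (snd x)) s"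
proof (cases e)
  case (Receive i j m) then show ?thesis using assms by (cases m) (auto split: if_splits)
next
  case (Act q a) then show ?thesis using assms
  proof (cases a)
    case (Guard g') then show ?thesis using assms Act by (cases g') (auto split: if_splits)
  next
    case (HandleS j X) then show ?thesis using assms Act
      by (cases "x = (j,X)") (auto split: if_splits simp: in_set_remove1)
  qed (auto split: if_splits)
qed (use assms in \<open>auto split: if_splits\<close>)

lemma effect_mono:
  "agS s \<subseteq> agS (effect a s) \<and> ackfrom s \<subseteq> ackfrom (effect a s) \<and>
   readyfrom s \<subseteq> readyfrom (effect a s) \<and> confirmfrom s \<subseteq> confirmfrom (effect a s) \<and>
   fired s \<subseteq> fired (effect a s)"
proof (cases a)
  case (Guard g) then show ?thesis by (cases g) auto
qed auto

lemma recv_mono: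
  "agS s \<subseteq> agS (recv_upd j m s) \<and> ackfrom s \<subseteq> ackfrom (recv_upd j m s) \<and>
   readyfrom s \<subseteq> readyfrom (recv_upd j m s) \<and> confirmfrom s \<subseteq> confirmfrom (recv_upd j m s) \<and>
   fired s \<subseteq> fired (recv_upd j m s)"
  by (cases m) auto

lemma step_mono:
  "agS s \<subseteq> agS (step QS p e s) \<and> ackfrom s \<subseteq> ackfrom (step QS p e s) \<and>
   readyfrom s \<subseteq> readyfrom (step QS p e s) \<and> confirmfrom s \<subseteq> confirmfrom (step QS p e s) \<and>
   fired s \<subseteq> fired (step QS p e s)"
  by (cases e) (simp_all add: effect_mono recv_mono subset_insertI)

lemma lst_mono:
  assumes "t \<le> t'"
  shows "agS (lst QS ev p t) \<subseteq> agS (lst QS ev p t')"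
    "ackfrom (lst QS ev p t) \<subseteq> ackfrom (lst QS ev p t')"
    "readyfrom (lst QS ev p t) \<subseteq> readyfrom (lst QS ev p t')"
    "confirmfrom (lst QS ev p t) \<subseteq> confirmfrom (lst QS ev p t')"
    "fired (lst QS ev p t) \<subseteq> fired (lst QS ev p t')"
proof -
  show "agS (lst QS ev p t) \<subseteq> agS (lst QS ev p t')"
    by (rule lift_Suc_mono_le[OF _ assms, where f="\<lambda>t. agS (lst QS ev p t)"]) (simp add: step_mono)
  show "ackfrom (lst QS ev p t) \<subseteq> ackfrom (lst QS ev p t')"
    by (rule lift_Suc_mono_le[OF _ assms, where f="\<lambda>t. ackfrom (lst QS ev p t)"]) (simp add: step_mono)
  show "readyfrom (lst QS ev p t) \<subseteq> readyfrom (lst QS ev p t')"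
    by (rule lift_Suc_mono_le[OF _ assms, where f="\<lambda>t. readyfrom (lst QS ev p t)"]) (simp add: step_mono)
  show "confirmfrom (lst QS ev p t) \<subseteq> confirmfrom (lst QS ev p t')"
    by (rule lift_Suc_mono_le[OF _ assms, where f="\<lambda>t. confirmfrom (lst QS ev p t)"]) (simp add: step_mono)
  show "fired (lst QS ev p t) \<subseteq> fired (lst QS ev p t')"
    by (rule lift_Suc_mono_le[OF _ assms, where f="\<lambda>t. fired (lst QS ev p t)"]) (simp add: step_mono)
qed


lemma fired_origin:
  "g \<in> fired (lst QS ev p t) \<Longrightarrow> \<exists>t0<t. ev t0 = Act p (Guard g) \<and> enabled QS p (Guard g) (lst QS ev p t0)"
proof (induction t)
  case 0 then show ?case by (simp add: init_state_def)
next
  case (Suc t)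
  show ?case
  proof (cases "g \<in> fired (lst QS ev p t)")
    case True then show ?thesis using Suc.IH less_Suc_eq by blast
  next
    case False then show ?thesis using fired_step[of g QS p "ev t" "lst QS ev p t"] Suc.prems by auto
  qed
qed

lemma sentT_G8: "sentT (lst QS ev p t) \<longrightarrow> G8 \<in> fired (lst QS ev p t)"
  by (induction t) (simp_all add: init_state_def sentT_step)

lemma confirm_origin:
  "k \<in> confirmfrom (lst QS ev p t) \<Longrightarrow> \<exists>t0<t. ev t0 = Receive p k Confirm"
proof (induction t)
  case 0 then show ?case by (simp add: init_state_def)
next
  case (Suc t)
  show ?case
  proof (cases "k \<in> confirmfrom (lst QS ev p t)")
    case True then show ?thesis using Suc.IH less_Suc_eq by blast
  next
    case False then show ?thesis using confirm_step[of k QS p "ev t" "lst QS ev p t"] Suc.prems by auto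
  qed
qed

lemma agS_origin:
  "(k,x) \<in> agS (lst QS ev p t) \<Longrightarrow> \<exists>t0<t. ev t0 = ArbDeliver p k x"
proof (induction t)
  case 0 then show ?case by (simp add: init_state_def)
next
  case (Suc t)
  show ?case
  proof (cases "(k,x) \<in> agS (lst QS ev p t)")
    case True then show ?thesis using Suc.IH less_Suc_eq by blast
  next
    case False then show ?thesis using agS_step[of k x QS p "ev t" "lst QS ev p t"] Suc.prems by auto
  qed
qed

lemma agS_finite: "finite (agS (lst QS ev p t))"
  by (induction t) (simp_all add: init_state_def agS_fin_step)

lemma pend_removed:
  "x \<in> set (pendS (lst QS ev k t)) \<Longrightarrow> x \<notin> set (pendS (lst QS ev k (t + d))) \<Longrightarrow>
   \<exists>t''. t \<le> t'' \<and> t'' < t + d \<and> ev t'' = Act k (HandleS (fst x) (snd x)) \<and>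
     enabled QS k (HandleS (fst x) (snd x)) (lst QS ev k t'')"
proof (induction d)
  case 0 then show ?case by simp
next
  case (Suc d)
  show ?case
  proof (cases "x \<in> set (pendS (lst QS ev k (t + d)))")
    case True
    then show ?thesis using pend_step[OF True, of QS k "ev (t+d)"] Suc.prems
      by (intro exI[of _ "t+d"]) auto
  next
    case False then show ?thesis using Suc.IH[OF Suc.prems(1) False] by (metis add_Suc_right less_SucI)
  qed
qed
lemma eventually_all:
  fixes P :: "'a \<Rightarrow> nat \<Rightarrow> bool"
  assumes "finite A" "\<forall>a\<in>A. \<exists>t. P a t" "\<And>a t t'. P a t \<Longrightarrow> t \<le> t' \<Longrightarrow> P a t'"
  shows "\<exists>t. \<forall>a\<in>A. P a t"
  using assms(1,2)
proof (induction A rule: finite_induct)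
  case empty then show ?case by simp
next
  case (insert x F)
  then obtain t1 where t1: "\<forall>a\<in>F. P a t1" by auto
  obtain t2 where t2: "P x t2" using insert.prems by auto
  have "P x (max t1 t2)" by (rule assms(3)[OF t2 max.cobounded2])
  moreover have "\<forall>a\<in>F. P a (max t1 t2)" using t1 assms(3) by (meson max.cobounded1)
  ultimately show ?case by blast
qed

lemma gmax_props:
  assumes "i \<in> Gmax FP QS F"
  shows "i \<notin> F" "F \<in> star (FP i)" "\<exists>Q\<in>QS i. Q \<subseteq> Gmax FP QS F"
proof -
  obtain G where G: "guild FP QS F G" "i \<in> G" using assms unfolding Gmax_def by blast
  then have "G \<subseteq> Gmax FP QS F" unfolding Gmax_def by blast
  moreover have "wise FP F i" "\<exists>Q\<in>QS i. Q \<subseteq> G" using G unfolding guild_def by auto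
  ultimately show "i \<notin> F" "F \<in> star (FP i)" "\<exists>Q\<in>QS i. Q \<subseteq> Gmax FP QS F"
    unfolding wise_def by auto
qed

lemma exec_prop:
  assumes "ag_execution FP QS F ev"
  shows "\<forall>p. p \<notin> F \<longrightarrow> (\<exists>!t. \<exists>x. ev t = Propose p x)"
  using assms unfolding ag_execution_def by (elim conjE) assumption

lemma exec_rel:
  assumes "ag_execution FP QS F ev"
  shows "\<forall>p q m t. p \<notin> F \<longrightarrow> q \<notin> F \<longrightarrow> sends QS ev p q m t \<longrightarrow> (\<exists>t'>t. ev t' = Receive q p m)"
  using assms unfolding ag_execution_def by (elim conjE) assumption

lemma exec_auth:
  assumes "ag_execution FP QS F ev"
  shows "\<forall>p q m t. p \<notin> F \<longrightarrow> q \<notin> F \<longrightarrow> ev t = Receive q p m \<longrightarrow> (\<exists>t'<t. sends QS ev p q m t')"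
  using assms unfolding ag_execution_def by (elim conjE) assumption

lemma exec_fair:
  assumes "ag_execution FP QS F ev"
  shows "\<forall>p a t. p \<notin> F \<longrightarrow> enabled QS p a (lst QS ev p t) \<longrightarrow> (\<exists>t'\<ge>t. ev t' = Act p a)"
  using assms unfolding ag_execution_def by (elim conjE) assumption

lemma exec_valid:
  assumes "ag_execution FP QS F ev"
  shows "\<forall>j x t. j \<notin> F \<longrightarrow> ev t = Propose j x \<longrightarrow> (\<forall>i\<in>Gmax FP QS F. \<exists>t'. ev t' = ArbDeliver i j x)"
  using assms unfolding ag_execution_def by (elim conjE) assumption

lemma exec_cons:
  assumes "ag_execution FP QS F ev"
  shows "\<forall>i k j x y t t'. i \<in> Gmax FP QS F \<longrightarrow> k \<in> Gmax FP QS F \<longrightarrow> ev t = ArbDeliver i j x \<longrightarrow> ev t' = ArbDeliver k j y \<longrightarrow> x = y"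
  using assms unfolding ag_execution_def by (elim conjE) assumption

lemma exec_tot:
  assumes "ag_execution FP QS F ev"
  shows "\<forall>i j x t. i \<in> Gmax FP QS F \<longrightarrow> ev t = ArbDeliver i j x \<longrightarrow> (\<forall>k\<in>Gmax FP QS F. \<exists>t' y. ev t' = ArbDeliver k j y)"
  using assms unfolding ag_execution_def by (elim conjE) assumption

lemma enabled_guard_mono:
  assumes "t \<le> t'" "g \<noteq> G10" "enabled QS p (Guard g) (lst QS ev p t)" "g \<notin> fired (lst QS ev p t')"
  shows "enabled QS p (Guard g) (lst QS ev p t')"
proof -
  note m = lst_mono[OF assms(1), of QS ev p]
  show ?thesis
  proof (cases g)
    case G3 then show ?thesis using assms(3,4) m(1) by simp (meson subsetD)
  next
    case G5 then show ?thesis using assms(3,4) m(2) by simp (meson order_trans)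
  next
    case G6 then show ?thesis using assms(3,4) m(3) by simp (meson order_trans)
  next
    case G7 then show ?thesis using assms(3,4) m(4) by simp (meson order_trans)
  next
    case G8 then show ?thesis using assms(3,4) m(4) by simp (meson order_trans)
  qed (use assms(2) in simp)
qed

lemma guard_fires:
  assumes exec: "ag_execution FP QS F ev" and "p \<notin> F" "g \<noteq> G10"
    and en: "g \<notin> fired (lst QS ev p t) \<longrightarrow> enabled QS p (Guard g) (lst QS ev p t)"
  shows "\<exists>t'. ev t' = Act p (Guard g) \<and> enabled QS p (Guard g) (lst QS ev p t')"
proof (cases "g \<in> fired (lst QS ev p t)")
  case True then show ?thesis using fired_origin[OF True] by blast
next
  case False
  then have en': "enabled QS p (Guard g) (lst QS ev p t)" using en by blast
  note fair = exec_fair[OF exec]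
  obtain t' where t': "t' \<ge> t" "ev t' = Act p (Guard g)" using fair en' assms(2) by blast
  show ?thesis
  proof (cases "g \<in> fired (lst QS ev p t')")
    case True then show ?thesis using fired_origin[OF True] by blast
  next
    case False then show ?thesis using enabled_guard_mono[OF t'(1) assms(3) en' False] t'(2) by blast
  qed
qed

lemma sendsI:
  "ev t = Act p a \<Longrightarrow> enabled QS p a (lst QS ev p t) \<Longrightarrow> (q, m) \<in> outputs p a (lst QS ev p t)
   \<Longrightarrow> sends QS ev p q m t"
  unfolding sends_def by blast

lemma confirm_all:
  assumes "sends QS ev k j Confirm t" shows "sends QS ev k q Confirm t"
proof -
  obtain a where a: "ev t = Act k a" "enabled QS k a (lst QS ev k t)"
    "(j, Confirm) \<in> outputs k a (lst QS ev k t)"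
    using assms unfolding sends_def by blast
  then have "(q, Confirm) \<in> outputs k a (lst QS ev k t)"
  proof (cases a)
    case (Guard g) then show ?thesis using a by (cases g) auto
  qed (auto split: if_splits)
  then show ?thesis using a sendsI by metis
qed

lemma received:
  assumes exec: "ag_execution FP QS F ev" and "p \<notin> F" "q \<notin> F" "sends QS ev p q m t"
  shows "\<exists>t'. lst QS ev q (Suc t') = recv_upd p m (lst QS ev q t')"
proof -
  note exec_rel[OF exec]
  then obtain t' where "ev t' = Receive q p m" using assms by blast
  then show ?thesis by (intro exI[of _ t']) simp
qed

lemma confirm_recv:
  assumes exec: "ag_execution FP QS F ev" and "k \<notin> F" "i \<notin> F" "sends QS ev k i Confirm t"
  shows "\<exists>t'. k \<in> confirmfrom (lst QS ev i t')"
proof -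
  obtain t' where "lst QS ev i (Suc t') = recv_upd k Confirm (lst QS ev i t')"
    using received[OF assms] by blast
  then show ?thesis by (intro exI[of _ "Suc t'"]) simp
qed

lemma ready_recv:
  assumes exec: "ag_execution FP QS F ev" and "k \<notin> F" "i \<notin> F" "sends QS ev k i Ready t"
  shows "\<exists>t'. k \<in> readyfrom (lst QS ev i t')"
proof -
  obtain t' where "lst QS ev i (Suc t') = recv_upd k Ready (lst QS ev i t')"
    using received[OF assms] by blast
  then show ?thesis by (intro exI[of _ "Suc t'"]) simp
qed

lemma ack_recv:
  assumes exec: "ag_execution FP QS F ev" and "k \<notin> F" "i \<notin> F" "sends QS ev k i (Ack k') t"
  shows "\<exists>t'. k \<in> ackfrom (lst QS ev i t')"
proof -
  obtain t' where "lst QS ev i (Suc t') = recv_upd k (Ack k') (lst QS ev i t')"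
    using received[OF assms] by blast
  then show ?thesis by (intro exI[of _ "Suc t'"]) simp
qed

lemma confirm_quorum_G8:
  fixes QS :: "'p::finite \<Rightarrow> 'p set set"
  assumes exec: "ag_execution FP QS F ev" and iF: "i \<notin> F" and Q: "Q \<in> QS i" "Q \<inter> F = {}"
    and snd: "\<forall>k\<in>Q. \<exists>t. sends QS ev k i Confirm t"
  shows "\<exists>t q j X. sends QS ev i q (DistributeT j X) t"
proof -
  have "\<forall>k\<in>Q. \<exists>t. k \<in> confirmfrom (lst QS ev i t)"
    using snd confirm_recv[OF exec _ iF] Q(2) by blast
  then obtain t where t: "\<forall>k\<in>Q. k \<in> confirmfrom (lst QS ev i t)"
    using eventually_all[of Q "\<lambda>k t. k \<in> confirmfrom (lst QS ev i t)"] lst_mono(4)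
    by (metis finite subsetD)
  have en: "G8 \<notin> fired (lst QS ev i t) \<longrightarrow> enabled QS i (Guard G8) (lst QS ev i t)"
    using t Q(1) by auto
  have "\<exists>t'. ev t' = Act i (Guard G8) \<and> enabled QS i (Guard G8) (lst QS ev i t')"
    by (rule guard_fires[OF exec iF _ en]) simp
  then obtain t' where a: "ev t' = Act i (Guard G8)" and b: "enabled QS i (Guard G8) (lst QS ev i t')"
    by blast
  have "sends QS ev i i (DistributeT i (agT (lst QS ev i t'))) t'"
    by (rule sendsI[OF a b]) simp
  then show ?thesis by blast
qed

lemma aqs_cons:
  assumes "asym_quorum_system FP QS" "Qi \<in> QS i" "Qj \<in> QS j" "Fij \<in> star (FP i)" "Fij \<in> star (FP j)"
  shows "\<not> Qi \<inter> Qj \<subseteq> Fij"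
proof -
  have "\<forall>i j Qi Qj Fij. Qi \<in> QS i \<longrightarrow> Qj \<in> QS j \<longrightarrow> Fij \<in> star (FP i) \<inter> star (FP j)
          \<longrightarrow> \<not> (Qi \<inter> Qj \<subseteq> Fij)"
    using assms(1) unfolding asym_quorum_system_def by (elim conjE) assumption
  then show ?thesis using assms(2-5) by blast
qed

lemma case1:
  fixes QS :: "'p::finite \<Rightarrow> 'p set set"
  assumes aqs: "asym_quorum_system FP QS" and exec: "ag_execution FP QS F ev"
    and j: "j \<in> Gmax FP QS F" and a: "ev t = Act j (Guard G8)" and b: "enabled QS j (Guard G8) (lst QS ev j t)"
    and i: "i \<in> Gmax FP QS F"
  shows "\<exists>t. sends QS ev i q Confirm t"
proof -
  obtain Qj where Qj: "Qj \<in> QS j" "Qj \<subseteq> confirmfrom (lst QS ev j t)" using b by auto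
  define K where "K = Qj - F"
  note jF = gmax_props(1)[OF j] and iF = gmax_props(1)[OF i]
  have sK: "\<exists>t. sends QS ev k i Confirm t" if k: "k \<in> K" for k
  proof -
    have kF: "k \<notin> F" using k K_def by auto
    have "k \<in> confirmfrom (lst QS ev j t)" using Qj(2) k K_def by blast
    then obtain t0 where t0: "ev t0 = Receive j k Confirm" using confirm_origin[of k QS ev j t] by blast
    obtain t1 where "sends QS ev k j Confirm t1" using exec_auth[OF exec] kF jF t0 by blast
    then show ?thesis using confirm_all[of QS ev k j t1 i] by blast
  qed
  have "\<forall>k\<in>K. \<exists>t. k \<in> confirmfrom (lst QS ev i t)"
    using sK confirm_recv[OF exec _ iF] K_def by blast
  then obtain t2 where t2: "\<forall>k\<in>K. k \<in> confirmfrom (lst QS ev i t2)"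
    using eventually_all[of K "\<lambda>k t. k \<in> confirmfrom (lst QS ev i t)"] lst_mono(4)
    by (metis finite subsetD)
  have "K \<in> kernels QS i"
    unfolding kernels_def
  proof (intro CollectI ballI)
    fix Q assume Q: "Q \<in> QS i"
    have "\<not> Q \<inter> Qj \<subseteq> F"
      by (rule aqs_cons[OF aqs Q Qj(1)]) (use gmax_props(2)[OF i] gmax_props(2)[OF j] in auto)
    then show "K \<inter> Q \<noteq> {}" unfolding K_def by blast
  qed
  then have en: "G7 \<notin> fired (lst QS ev i t2) \<longrightarrow> enabled QS i (Guard G7) (lst QS ev i t2)"
    using t2 by auto
  have "\<exists>t'. ev t' = Act i (Guard G7) \<and> enabled QS i (Guard G7) (lst QS ev i t')"
    by (rule guard_fires[OF exec iF _ en]) simp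
  then obtain t' where a: "ev t' = Act i (Guard G7)" and b: "enabled QS i (Guard G7) (lst QS ev i t')"
    by blast
  have "sends QS ev i q Confirm t'"
    by (rule sendsI[OF a b]) simp
  then show ?thesis by blast
qed

lemma case2_ready:
  fixes QS :: "'p::finite \<Rightarrow> 'p set set"
  assumes exec: "ag_execution FP QS F ev"
    and noG8: "\<forall>j\<in>Gmax FP QS F. \<forall>t. \<not> (ev t = Act j (Guard G8) \<and> enabled QS j (Guard G8) (lst QS ev j t))"
    and i: "i \<in> Gmax FP QS F"
  shows "\<exists>t. sends QS ev i q Ready t"
proof -
  note iF = gmax_props(1)[OF i]
  obtain Qi where Qi: "Qi \<in> QS i" "Qi \<subseteq> Gmax FP QS F" using gmax_props(3)[OF i] by blast
  have nosent: "\<not> sentT (lst QS ev j t)" if j: "j \<in> Gmax FP QS F" for j t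
  proof
    assume "sentT (lst QS ev j t)"
    then have "G8 \<in> fired (lst QS ev j t)" using sentT_G8[of QS ev j t] by blast
    then obtain t0 where "ev t0 = Act j (Guard G8) \<and> enabled QS j (Guard G8) (lst QS ev j t0)"
      using fired_origin[of G8 QS ev j t] by blast
    then show False using noG8 j by blast
  qed
  have "\<exists>t. \<exists>x. (j, x) \<in> agS (lst QS ev i t)" if j: "j \<in> Qi" for j
  proof -
    have jG: "j \<in> Gmax FP QS F" using j Qi(2) by blast
    note jF = gmax_props(1)[OF jG]
    obtain tp x where tp: "ev tp = Propose j x" using exec_prop[OF exec] jF by blast
    obtain t' where t': "ev t' = ArbDeliver i j x" using exec_valid[OF exec] jF tp i by blast
    have "(j, x) \<in> agS (lst QS ev i (Suc t'))" using t' by simp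
    then show ?thesis by blast
  qed
  then obtain ta where ta: "\<forall>j\<in>Qi. \<exists>x. (j, x) \<in> agS (lst QS ev i ta)"
    using eventually_all[of Qi "\<lambda>j t. \<exists>x. (j, x) \<in> agS (lst QS ev i t)"] lst_mono(1)
    by (metis finite subsetD)
  then have en3: "G3 \<notin> fired (lst QS ev i ta) \<longrightarrow> enabled QS i (Guard G3) (lst QS ev i ta)"
    using Qi(1) by auto
  have "\<exists>t'. ev t' = Act i (Guard G3) \<and> enabled QS i (Guard G3) (lst QS ev i t')"
    by (rule guard_fires[OF exec iF _ en3]) simp
  then obtain t3 where a3: "ev t3 = Act i (Guard G3)" and b3: "enabled QS i (Guard G3) (lst QS ev i t3)"
    by blast
  define S where "S = agS (lst QS ev i t3)"
  have sendS: "sends QS ev i k (DistributeS i S) t3" for k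
    by (rule sendsI[OF a3 b3]) (simp add: S_def)
  have "\<exists>t. k \<in> ackfrom (lst QS ev i t)" if k: "k \<in> Qi" for k
  proof -
    have kG: "k \<in> Gmax FP QS F" using k Qi(2) by blast
    note kF = gmax_props(1)[OF kG]
    obtain t4 where t4: "lst QS ev k (Suc t4) = recv_upd i (DistributeS i S) (lst QS ev k t4)"
      using received[OF exec iF kF sendS[of k]] by blast
    have pend4: "(i, S) \<in> set (pendS (lst QS ev k (Suc t4)))" using t4 by simp
    have "\<exists>t. y \<in> agS (lst QS ev k t)" if y: "y \<in> S" for y
    proof -
      obtain k' x where yx: "y = (k', x)" by (cases y)
      obtain t0 where t0: "ev t0 = ArbDeliver i k' x"
        using agS_origin[of k' x QS ev i t3] y yx S_def by blast
      obtain t' y' where t': "ev t' = ArbDeliver k k' y'"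
        using exec_tot[OF exec] i t0 kG by blast
      have "x = y'" using exec_cons[OF exec] i kG t0 t' by blast
      then have "y \<in> agS (lst QS ev k (Suc t'))" using t' yx by simp
      then show ?thesis by blast
    qed
    then obtain t5 where t5: "\<forall>y\<in>S. y \<in> agS (lst QS ev k t5)"
      using eventually_all[of S "\<lambda>y t. y \<in> agS (lst QS ev k t)"] lst_mono(1) agS_finite[of QS ev i t3]
      unfolding S_def by (metis subsetD)
    define t6 where "t6 = max (Suc t4) t5"
    have S6: "S \<subseteq> agS (lst QS ev k t'')" if "t6 \<le> t''" for t''
      using t5 lst_mono(1)[of t5 t'' QS ev k] that unfolding t6_def by auto
    have "\<exists>t''. ev t'' = Act k (HandleS i S) \<and> enabled QS k (HandleS i S) (lst QS ev k t'')"
    proof (cases "(i, S) \<in> set (pendS (lst QS ev k t6))")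
      case True
      then have en: "enabled QS k (HandleS i S) (lst QS ev k t6)" using S6 by simp
      obtain t' where t': "t' \<ge> t6" "ev t' = Act k (HandleS i S)"
        using exec_fair[OF exec] kF en by blast
      show ?thesis
      proof (cases "enabled QS k (HandleS i S) (lst QS ev k t')")
        case True then show ?thesis using t' by blast
      next
        case False
        then have "(i, S) \<notin> set (pendS (lst QS ev k (t6 + (t' - t6))))" using S6[OF t'(1)] t'(1) by simp
        from pend_removed[OF True this] show ?thesis by auto
      qed
    next
      case False
      then have "(i, S) \<notin> set (pendS (lst QS ev k (Suc t4 + (t6 - Suc t4))))" unfolding t6_def by simp
      from pend_removed[OF pend4 this] show ?thesis by auto
    qed
    then obtain t'' where a: "ev t'' = Act k (HandleS i S)" and b: "enabled QS k (HandleS i S) (lst QS ev k t'')"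
      by blast
    have "sends QS ev k i (Ack k) t''"
      by (rule sendsI[OF a b]) (simp add: nosent[OF kG])
    then show ?thesis using ack_recv[OF exec kF iF] by blast
  qed
  then obtain t7 where t7: "\<forall>k\<in>Qi. k \<in> ackfrom (lst QS ev i t7)"
    using eventually_all[of Qi "\<lambda>k t. k \<in> ackfrom (lst QS ev i t)"] lst_mono(2)
    by (metis finite subsetD)
  then have en5: "G5 \<notin> fired (lst QS ev i t7) \<longrightarrow> enabled QS i (Guard G5) (lst QS ev i t7)"
    using Qi(1) by auto
  have "\<exists>t'. ev t' = Act i (Guard G5) \<and> enabled QS i (Guard G5) (lst QS ev i t')"
    by (rule guard_fires[OF exec iF _ en5]) simp
  then obtain t' where a: "ev t' = Act i (Guard G5)" and b: "enabled QS i (Guard G5) (lst QS ev i t')"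
    by blast
  have "sends QS ev i q Ready t'"
    by (rule sendsI[OF a b]) simp
  then show ?thesis by blast
qed

lemma case2_confirm:
  fixes QS :: "'p::finite \<Rightarrow> 'p set set"
  assumes exec: "ag_execution FP QS F ev"
    and noG8: "\<forall>j\<in>Gmax FP QS F. \<forall>t. \<not> (ev t = Act j (Guard G8) \<and> enabled QS j (Guard G8) (lst QS ev j t))"
    and i: "i \<in> Gmax FP QS F"
  shows "\<exists>t. sends QS ev i q Confirm t"
proof -
  note iF = gmax_props(1)[OF i]
  obtain Qi where Qi: "Qi \<in> QS i" "Qi \<subseteq> Gmax FP QS F" using gmax_props(3)[OF i] by blast
  have "\<exists>t. k \<in> readyfrom (lst QS ev i t)" if k: "k \<in> Qi" for k
  proof -
    have kG: "k \<in> Gmax FP QS F" using k Qi(2) by blast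
    obtain t where "sends QS ev k i Ready t" using case2_ready[OF exec noG8 kG] by blast
    then show ?thesis using ready_recv[OF exec gmax_props(1)[OF kG] iF] by blast
  qed
  then obtain t7 where t7: "\<forall>k\<in>Qi. k \<in> readyfrom (lst QS ev i t7)"
    using eventually_all[of Qi "\<lambda>k t. k \<in> readyfrom (lst QS ev i t)"] lst_mono(3)
    by (metis finite subsetD)
  then have en: "G6 \<notin> fired (lst QS ev i t7) \<longrightarrow> enabled QS i (Guard G6) (lst QS ev i t7)"
    using Qi(1) by auto
  have "\<exists>t'. ev t' = Act i (Guard G6) \<and> enabled QS i (Guard G6) (lst QS ev i t')"
    by (rule guard_fires[OF exec iF _ en]) simp
  then obtain t' where a: "ev t' = Act i (Guard G6)" and b: "enabled QS i (Guard G6) (lst QS ev i t')"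
    by blast
  have "sends QS ev i q Confirm t'"
    by (rule sendsI[OF a b]) simp
  then show ?thesis by blast
qed

theorem lemma3p6:
  fixes FP QS :: "'p::finite \<Rightarrow> 'p set set"
    and F :: "'p set"
    and ev :: "nat \<Rightarrow> ('p, 'v) event"
  assumes "asym_quorum_system FP QS"
    and "ag_execution FP QS F ev"
    and "\<exists>G. G \<noteq> {} \<and> guild FP QS F G"
  shows "\<forall>i\<in>Gmax FP QS F. \<exists>t q j X. sends QS ev i q (DistributeT j X) t"
proof
  fix i assume i: "i \<in> Gmax FP QS F"
  have C: "\<exists>t. sends QS ev k i Confirm t" if k: "k \<in> Gmax FP QS F" for k
  proof (cases "\<exists>j\<in>Gmax FP QS F. \<exists>t. ev t = Act j (Guard G8) \<and> enabled QS j (Guard G8) (lst QS ev j t)")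
    case True
    then obtain j t where j: "j \<in> Gmax FP QS F" "ev t = Act j (Guard G8)" "enabled QS j (Guard G8) (lst QS ev j t)"
      by blast
    show ?thesis using case1[OF assms(1,2) j k] .
  next
    case False
    then have "\<forall>j\<in>Gmax FP QS F. \<forall>t. \<not> (ev t = Act j (Guard G8) \<and> enabled QS j (Guard G8) (lst QS ev j t))"
      by blast
    from case2_confirm[OF assms(2) this k] show ?thesis .
  qed
  obtain Qi where Qi: "Qi \<in> QS i" "Qi \<subseteq> Gmax FP QS F" using gmax_props(3)[OF i] by blast
  have "Qi \<inter> F = {}" using Qi(2) gmax_props(1)[of _ FP QS F] by blast
  moreover have "\<forall>k\<in>Qi. \<exists>t. sends QS ev k i Confirm t" using C Qi(2) by blast
  ultimately show "\<exists>t q j X. sends QS ev i q (DistributeT j X) t"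
    using confirm_quorum_G8[OF assms(2) gmax_props(1)[OF i] Qi(1)] by blast
qed

end
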